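(* Let $\langle B,\wedge,{}'\rangle$ be an algebra with $\wedge$ binary and ${}'$ unary satisfying $x\wedge(y\wedge z)\approx y\wedge(z\wedge x)$ and $x\approx (x'\wedge y)'\wedge(x'\wedge y')'$. Then $x\wedge y=y\wedge x$ for all $x,y\in B$. *)

theory Defs
  imports Main
begin

end

theory Submission
  imports Defs
begin

theorem lemma4p20:
  fixes meet :: "'b \<Rightarrow> 'b \<Rightarrow> 'b" and cmp :: "'b \<Rightarrow> 'b"
  assumes A1: "\<And>x y z. meet x (meet y z) = meet y (meet z x)"
    and A2: "\<And>x y. x = meet (cmp (meet (cmp x) y)) (cmp (meet (cmp x) (cmp y)))"
  shows "\<forall>x y. meet x y = meet y x"
proof (intro allI)
  fix x y
  have f1: "\<And>b ba bb bc. meet b (meet ba (meet bb bc)) = meet bb (meet (meet bc ba) b)"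
    by (metis (no_types) A1)
  have f2: "\<And>b ba bb. meet (cmp (meet (cmp b) ba)) (meet (cmp (meet (cmp b) (cmp ba))) bb) = meet bb b"
    by (metis A1 A2)
  have f3: "\<And>b ba bb bc. meet b (meet (meet ba bb) bc) = meet bb (meet (meet b ba) bc)"
    by (metis A1)
  have "\<And>b ba bb bc bd. meet (cmp (meet (cmp b) ba)) (meet bb (meet (meet (cmp (meet (cmp b) (cmp ba))) bc) bd)) = meet bc (meet bd (meet bb b))"
    using f2 by (smt (verit) A1)
  then have "\<And>b ba bb bc. meet (meet (meet b ba) bb) bc = meet b (meet bb (meet ba bc))"
    using f3 f2 by (metis (no_types))
  then have "\<And>b ba bb. meet (meet b ba) bb = meet (meet bb ba) b"
    using f2 by (metis (no_types) A1 A2)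
  then show "meet x y = meet y x"
    using f2 f1 by (metis A2)
qed

end
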